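(* Let $a^2\ge0$, $b^2,c^2>0$ and $$f(x,y)=-\frac{a^2}2(x^2+y^2)+\frac{c^2}4(x^2+y^2)^2-\frac{b^2}{3\sqrt6}y(y^2-3x^2),\qquad (x,y)\in\mathbb R^2.$$ Then $\min_{\mathbb R^2}f=-\frac{a^2}{3}s_+^2-\frac{2b^2}{27}s_+^3+\frac{c^2}{9}s_+^4$, and this minimum is attained at, and only at, the three points $\big(0,\frac{2}{\sqrt6}s_+\big)$ and $\big(\pm\frac1{\sqrt2}s_+,-\frac1{\sqrt6}s_+\big)$. Furthermore, the Hessian of $f$ is positive definite at each of these three points.
   Context: $s_+=\frac{b^2+\sqrt{b^4+24a^2c^2}}{4c^2}$. *)

theory Defs
  imports "HOL-Analysis.Analysis"
begin

definition fabc :: "real \<Rightarrow> real \<Rightarrow> real \<Rightarrow> real \<times> real \<Rightarrow> real" where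
  "fabc a b c p = (case p of (x, y) \<Rightarrow>
      - (a^2 / 2) * (x^2 + y^2) + (c^2 / 4) * (x^2 + y^2)^2
      - (b^2 / (3 * sqrt 6)) * y * (y^2 - 3 * x^2))"

definition s_plus :: "real \<Rightarrow> real \<Rightarrow> real \<Rightarrow> real" where
  "s_plus a b c = (b^2 + sqrt (b^4 + 24 * a^2 * c^2)) / (4 * c^2)"

definition pd1 :: "(real \<times> real \<Rightarrow> real) \<Rightarrow> real \<times> real \<Rightarrow> real" where
  "pd1 g p = deriv (\<lambda>t. g (t, snd p)) (fst p)"

definition pd2 :: "(real \<times> real \<Rightarrow> real) \<Rightarrow> real \<times> real \<Rightarrow> real" where
  "pd2 g p = deriv (\<lambda>t. g (fst p, t)) (snd p)"

definition hessian :: "(real \<times> real \<Rightarrow> real) \<Rightarrow> real \<times> real \<Rightarrow> nat \<Rightarrow> nat \<Rightarrow> real" where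
  "hessian g p i j =
     (let d = (\<lambda>k h. if k = 1 then pd1 h else pd2 h) in d i (d j g) p)"

definition hessian_pos_def :: "(real \<times> real \<Rightarrow> real) \<Rightarrow> real \<times> real \<Rightarrow> bool" where
  "hessian_pos_def g p \<longleftrightarrow>
     (\<forall>v :: nat \<Rightarrow> real. (v 1, v 2) \<noteq> (0, 0) \<longrightarrow>
        (\<Sum>i\<in>{1,2}. \<Sum>j\<in>{1,2}. v i * hessian g p i j * v j) > 0)"

end

theory Submission
  imports Defs
begin

lemma poly_id:
  fixes A K C q r :: real
  assumes "A = C * q^2 - 3 * K * q"
  shows "- (A/2) * r^2 + (C/4) * r^4 - K * r^3 - (- (A/2) * q^2 + (C/4) * q^4 - K * q^3)
     = (r - q)^2 * (C/4 * r^2 + (C * q/2 - K) * r + (q/2) * (C * q/2 - K))"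
  unfolding assms by (simp add: field_simps power2_eq_square power3_eq_cube power4_eq_xxxx; simp add: algebra_simps)

lemma m_id:
  fixes t A B C s :: real
  assumes "t * t = 6" "t > 0"
  shows "- (A/2) * (2 * s / t)^2 + (C/4) * (2 * s / t)^4 - B/(3 * t) * (2 * s / t)^3
       = - (A / 3) * s^2 - (2 * B / 27) * s^3 + (C / 9) * s^4"
proof -
  have t4: "t^4 = 36" using assms(1) by (simp add: power4_eq_xxxx)
  have t2: "t^2 = 6" using assms(1) by (simp add: power2_eq_square)
  have e1: "(2 * s / t)^2 = 2 * s^2/3" by (simp add: power_divide t2)
  have e4: "(2 * s / t)^4 = 4 * s^4/9" by (simp add: power_divide t4)
  have e3: "B/(3 * t) * (2 * s / t)^3 = 2 * B * s^3/27"
    using assms by (simp add: power_divide field_simps power3_eq_cube power4_eq_xxxx t4)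
  show ?thesis unfolding e3 e1 e4 by (simp add: field_simps)
qed

lemma cube_ineq:
  fixes x y r :: real
  assumes "r = sqrt (x^2+y^2)"
  shows "y * (y^2-3 * x^2) \<le> r^3" and "(x^2+y^2)^3 - (y * (y^2-3 * x^2))^2 = x^2 * (x^2-3 * y^2)^2"
    and "r^2 = x^2+y^2"
proof -
  show id: "(x^2+y^2)^3 - (y * (y^2-3 * x^2))^2 = x^2 * (x^2-3 * y^2)^2"
    by (simp add: power2_eq_square power3_eq_cube algebra_simps)
  show r2: "r^2 = x^2+y^2" using assms by simp
  have r0: "r \<ge> 0" using assms by simp
  have "(y * (y^2-3 * x^2))^2 \<le> (x^2+y^2)^3" proof -
    have "x^2 * (x^2-3 * y^2)^2 \<ge> 0" by simp
    then show ?thesis using id by linarith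
  qed
  also have "(x^2+y^2)^3 = (r^3)^2" unfolding r2[symmetric] by (simp add: power_mult[symmetric])
  finally show "y * (y^2-3 * x^2) \<le> r^3" by (rule power2_le_imp_le) (use r0 in simp)
qed

lemma posdef2:
  fixes h11 h12 h22 v1 v2 :: real
  assumes "h11 > 0" "h11 * h22 - h12^2 > 0" "(v1, v2) \<noteq> (0,0)"
  shows "v1 * h11 * v1 + v1 * h12 * v2 + (v2 * h12 * v1 + v2 * h22 * v2) > 0"
proof (cases "v2 = 0")
  case True
  then have "v1 \<noteq> 0" using assms(3) by auto
  then have "v1 * v1 > 0" by (cases "v1 > 0") (auto simp: mult_neg_neg)
  then show ?thesis using True assms(1) by (simp add: mult.commute mult.left_commute)
next
  case False
  have a: "(h11 * h22 - h12^2) * v2^2 > 0" using False assms(2) by simp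
  have b: "(h11 * v1 + h12 * v2)^2 \<ge> 0" by simp
  have e: "h11 * (v1 * h11 * v1 + v1 * h12 * v2 + (v2 * h12 * v1 + v2 * h22 * v2))
     = (h11 * v1 + h12 * v2)^2 + (h11 * h22 - h12^2) * v2^2"
    by (simp add: power2_eq_square algebra_simps)
  have "h11 * (v1 * h11 * v1 + v1 * h12 * v2 + (v2 * h12 * v1 + v2 * h22 * v2)) > 0"
    unfolding e using a b by linarith
  then show ?thesis using assms(1) by (simp add: zero_less_mult_iff)
qed

lemma f_expand: "fabc a b c (x,y) = -(a^2/2) * (x^2+y^2) + (c^2/4) * (x^2+y^2)^2
     - (b^2/(3 * sqrt 6)) * (y * (y^2-3 * x^2))"
  by (simp add: fabc_def mult.assoc)

lemma pd1_f:
  assumes K: "K = b^2/(3 * sqrt 6)"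
  shows "pd1 (fabc a b c) = (\<lambda>p. - (a^2 * fst p) + c^2 * ((fst p)^2 + (snd p)^2) * fst p
     + 6 * K * fst p * snd p)"
proof (rule ext)
  fix p :: "real \<times> real"
  obtain x y where p: "p = (x,y)" by (cases p)
  have "((\<lambda>t. fabc a b c (t, y)) has_real_derivative
     (- (a^2 * x) + c^2 * (x^2+y^2) * x + 6 * K * x * y)) (at x)"
    unfolding f_expand K[symmetric]
    by (auto intro!: derivative_eq_intros simp: algebra_simps power2_eq_square)
  then show "pd1 (fabc a b c) p = - (a^2 * fst p) + c^2 * ((fst p)^2 + (snd p)^2) * fst p
     + 6 * K * fst p * snd p"
    unfolding pd1_def p by (simp add: DERIV_imp_deriv)
qed

lemma pd2_f:
  assumes K: "K = b^2/(3 * sqrt 6)"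
  shows "pd2 (fabc a b c) = (\<lambda>p. - (a^2 * snd p) + c^2 * ((fst p)^2 + (snd p)^2) * snd p
     - K * (3 * (snd p)^2 - 3 * (fst p)^2))"
proof (rule ext)
  fix p :: "real \<times> real"
  obtain x y where p: "p = (x,y)" by (cases p)
  have "((\<lambda>t. fabc a b c (x, t)) has_real_derivative
     (- (a^2 * y) + c^2 * (x^2+y^2) * y - K * (3 * y^2 - 3 * x^2))) (at y)"
    unfolding f_expand K[symmetric]
    by (auto intro!: derivative_eq_intros simp: algebra_simps power2_eq_square)
  then show "pd2 (fabc a b c) p = - (a^2 * snd p) + c^2 * ((fst p)^2 + (snd p)^2) * snd p
     - K * (3 * (snd p)^2 - 3 * (fst p)^2)"
    unfolding pd2_def p by (simp add: DERIV_imp_deriv)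
qed


lemma hess:
  fixes a b c K x y :: real
  assumes K: "K = b^2/(3 * sqrt 6)"
  shows "hessian (fabc a b c) (x,y) 1 1 = - (a^2) + c^2 * (3 * x^2 + y^2) + 6 * K * y"
    and "hessian (fabc a b c) (x,y) 1 2 = x * (2 * c^2 * y + 6 * K)"
    and "hessian (fabc a b c) (x,y) 2 1 = x * (2 * c^2 * y + 6 * K)"
    and "hessian (fabc a b c) (x,y) 2 2 = - (a^2) + c^2 * (x^2 + 3 * y^2) - 6 * K * y"
proof -
  have P1: "pd1 (fabc a b c) = (\<lambda>p. - (a^2 * fst p) + c^2 * ((fst p)^2 + (snd p)^2) * fst p
     + 6 * K * fst p * snd p)" by (rule pd1_f[OF K])
  have P2: "pd2 (fabc a b c) = (\<lambda>p. - (a^2 * snd p) + c^2 * ((fst p)^2 + (snd p)^2) * snd p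
     - K * (3 * (snd p)^2 - 3 * (fst p)^2))" by (rule pd2_f[OF K])
  have d11: "((\<lambda>t. - (a^2 * t) + c^2 * (t^2 + y^2) * t + 6 * K * t * y) has_real_derivative
      (- (a^2) + c^2 * (3 * x^2 + y^2) + 6 * K * y)) (at x)"
    by (auto intro!: derivative_eq_intros simp: algebra_simps power2_eq_square)
  have d12: "((\<lambda>t. - (a^2 * y) + c^2 * (t^2 + y^2) * y - K * (3 * y^2 - 3 * t^2)) has_real_derivative
      (x * (2 * c^2 * y + 6 * K))) (at x)"
    by (auto intro!: derivative_eq_intros simp: algebra_simps power2_eq_square)
  have d21: "((\<lambda>t. - (a^2 * x) + c^2 * (x^2 + t^2) * x + 6 * K * x * t) has_real_derivative
      (x * (2 * c^2 * y + 6 * K))) (at y)"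
    by (auto intro!: derivative_eq_intros simp: algebra_simps power2_eq_square)
  have d22: "((\<lambda>t. - (a^2 * t) + c^2 * (x^2 + t^2) * t - K * (3 * t^2 - 3 * x^2)) has_real_derivative
      (- (a^2) + c^2 * (x^2 + 3 * y^2) - 6 * K * y)) (at y)"
    by (auto intro!: derivative_eq_intros simp: algebra_simps power2_eq_square)
  show "hessian (fabc a b c) (x,y) 1 1 = - (a^2) + c^2 * (3 * x^2 + y^2) + 6 * K * y"
    unfolding hessian_def Let_def using DERIV_imp_deriv[OF d11] by (simp add: P1 pd1_def)
  show "hessian (fabc a b c) (x,y) 1 2 = x * (2 * c^2 * y + 6 * K)"
    unfolding hessian_def Let_def using DERIV_imp_deriv[OF d12] by (simp add: P2 pd1_def)
  show "hessian (fabc a b c) (x,y) 2 1 = x * (2 * c^2 * y + 6 * K)"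
    unfolding hessian_def Let_def using DERIV_imp_deriv[OF d21] by (simp add: P1 pd2_def)
  show "hessian (fabc a b c) (x,y) 2 2 = - (a^2) + c^2 * (x^2 + 3 * y^2) - 6 * K * y"
    unfolding hessian_def Let_def using DERIV_imp_deriv[OF d22] by (simp add: P2 pd2_def)
qed

lemma hp_intro:
  assumes "hessian g p 1 1 > 0"
    and "hessian g p 1 1 * hessian g p 2 2 - (hessian g p 1 2)^2 > 0"
    and "hessian g p 2 1 = hessian g p 1 2"
  shows "hessian_pos_def g p"
  unfolding hessian_pos_def_def
proof (intro allI impI)
  fix v :: "nat \<Rightarrow> real"
  assume v: "(v 1, v 2) \<noteq> (0, 0)"
  have "v 1 * hessian g p 1 1 * v 1 + v 1 * hessian g p 1 2 * v 2
      + (v 2 * hessian g p 1 2 * v 1 + v 2 * hessian g p 2 2 * v 2) > 0"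
    by (rule posdef2[OF assms(1,2) v])
  then show "(\<Sum>i\<in>{1,2}. \<Sum>j\<in>{1,2}. v i * hessian g p i j * v j) > 0"
    using assms(3) by simp
qed


theorem mainTheorem12:
  fixes a b c :: real
  assumes "a^2 \<ge> 0" and "b^2 > 0" and "c^2 > 0"
  defines "f \<equiv> fabc a b c" and "s \<equiv> s_plus a b c"
  defines "m \<equiv> - (a^2 / 3) * s^2 - (2 * b^2 / 27) * s^3 + (c^2 / 9) * s^4"
  shows "(\<forall>p. f p \<ge> m)
       \<and> {p. f p = m} = {(0, 2 / sqrt 6 * s), (1 / sqrt 2 * s, - 1 / sqrt 6 * s),
                        (- 1 / sqrt 2 * s, - 1 / sqrt 6 * s)}
       \<and> (\<forall>p\<in>{p. f p = m}. hessian_pos_def f p)"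
proof -
  have b2: "b^2 > 0" and c2: "c^2 > 0" using assms(2,3) by auto
  define t where "t = sqrt 6"
  define K where "K = b^2/(3 * t)"
  define q where "q = 2 * s / t"
  have t: "t * t = 6" "t > 0" unfolding t_def by auto
  have Kpos: "K > 0" unfolding K_def using b2 t by simp
  have f_eq: "\<And>x y. f (x,y) = -(a^2/2) * (x^2+y^2) + (c^2/4) * (x^2+y^2)^2 - K * (y * (y^2-3 * x^2))"
    unfolding f_def K_def t_def by (rule f_expand)
  define D where "D = sqrt (b^4 + 24 * a^2 * c^2)"
  have rad: "b^4 + 24 * a^2 * c^2 \<ge> 0" by simp
  have D2: "D^2 = b^4 + 24 * a^2 * c^2" unfolding D_def using rad by simp
  have Dge: "D \<ge> b^2" unfolding D_def
    by (rule real_le_rsqrt) (simp add: power_mult[symmetric])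
  have s_eq: "4 * c^2 * s = b^2 + D"
    unfolding s_def s_plus_def D_def using c2 by simp
  have spos: "s > 0"
  proof -
    have "4 * c^2 * s > 0" using s_eq Dge b2 by linarith
    then show ?thesis using c2 by (simp add: zero_less_mult_iff)
  qed
  have "(4 * c^2 * s - b^2)^2 = b^4 + 24 * a^2 * c^2" using s_eq D2 by simp
  then have "8 * c^2 * (2 * c^2 * s^2 - b^2 * s - 3 * a^2) = 0"
    by (simp add: power2_eq_square power4_eq_xxxx algebra_simps)
  then have rel: "3 * a^2 = 2 * c^2 * s^2 - b^2 * s" using c2 by simp
  have q2: "q^2 = 2 * s^2 / 3" unfolding q_def using t
    by (simp add: power_divide power2_eq_square)
  have Kq: "K * q = b^2 * s / 9" unfolding K_def q_def using t by (simp add: field_simps)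
  have A1: "3 * K * q = b^2 * s / 3" using Kq by (simp add: mult.assoc)
  have A2: "c^2 * q^2 = c^2 * (2 * s^2 / 3)" using q2 by simp
  have Arel: "a^2 = c^2 * q^2 - 3 * K * q"
    unfolding A1 A2 using rel by (simp add: field_simps; linarith)
  have qpos: "q > 0" unfolding q_def using spos t by simp
  have Bpos: "c^2 * q/2 - K > 0"
  proof -
    have "c^2 * q/2 - K = (3 * c^2 * s - b^2)/(3 * t)" unfolding q_def K_def using t
      by (simp add: field_simps)
    moreover have "3 * c^2 * s - b^2 > 0" using s_eq Dge b2 by linarith
    ultimately show ?thesis using t by simp
  qed
  have m_eq: "m = -(a^2/2) * q^2 + (c^2/4) * q^4 - K * q^3"
    unfolding m_def q_def K_def using m_id[OF t, where A="a^2" and B="b^2" and C="c^2" and s=s] by simp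
  define Q where "Q r = c^2/4 * r^2 + (c^2 * q/2 - K) * r + (q/2) * (c^2 * q/2 - K)" for r
  have Qpos: "Q r > 0" if "r \<ge> 0" for r
  proof -
    have "c^2/4 * r^2 \<ge> 0" using c2 by simp
    moreover have "(c^2 * q/2 - K) * r \<ge> 0" using Bpos that by simp
    moreover have "(q/2) * (c^2 * q/2 - K) > 0" using Bpos qpos by simp
    ultimately show ?thesis unfolding Q_def by linarith
  qed
  have decomp: "f (x,y) - m = (sqrt (x^2+y^2) - q)^2 * Q (sqrt (x^2+y^2))
      + (K * sqrt (x^2+y^2)^3 - K * (y * (y^2-3 * x^2)))" for x y
  proof -
    define r where "r = sqrt (x^2+y^2)"
    have e1: "x^2+y^2 = r^2" using cube_ineq(3)[OF r_def] by simp
    have e2: "(r^2)^2 = r^4" by (simp add: power_mult[symmetric])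
    have "f (x,y) = -(a^2/2) * r^2 + (c^2/4) * r^4 - K * (y * (y^2-3 * x^2))"
      unfolding f_eq e1 e2 by simp
    then show ?thesis using poly_id[OF Arel, of r] m_eq unfolding Q_def r_def[symmetric]
      by linarith
  qed
  have geq: "f (x,y) \<ge> m" for x y
  proof -
    define r where "r = sqrt (x^2+y^2)"
    have "r \<ge> 0" unfolding r_def by simp
    then have "(r - q)^2 * Q r \<ge> 0" using Qpos[of r] by (intro mult_nonneg_nonneg) auto
    moreover have "K * r^3 - K * (y * (y^2-3 * x^2)) \<ge> 0"
      using cube_ineq(1)[OF r_def] Kpos by (simp add: mult_left_mono)
    ultimately show ?thesis using decomp[of x y] unfolding r_def[symmetric] by linarith
  qed
  have hit: "f (x,y) = m" if h1: "x^2+y^2 = q^2" and h2: "y * (y^2-3 * x^2) = q^3" for x y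
  proof -
    have "sqrt (x^2+y^2) = q" using h1 qpos by simp
    then show ?thesis using decomp[of x y] h2 by simp
  qed
  have sq2: "(1 / sqrt 2 * s)^2 = s^2/2" by (simp add: power_mult_distrib power_divide)
  have sq2': "(- 1 / sqrt 2 * s)^2 = s^2/2" by (simp add: power_mult_distrib power_divide)
  have y6: "- 1 / sqrt 6 * s = - q/2" unfolding q_def t_def by simp
  have y6': "2 / sqrt 6 * s = q" unfolding q_def t_def by simp
  have side: "f (x, - q/2) = m" if "x^2 = s^2/2" for x
  proof (rule hit)
    show "x^2 + (-q/2)^2 = q^2" using that q2 by (simp add: power_divide field_simps)
    have "(- q / 2) * ((- q / 2)^2 - 3 * x^2) = q * (2 * s^2/3)"
      using that q2 by (simp add: power_divide field_simps power2_eq_square)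
    also have "\<dots> = q^3" using q2 by (simp add: power3_eq_cube power2_eq_square)
    finally show "(- q / 2) * ((- q / 2)^2 - 3 * x^2) = q^3" .
  qed
  define Pts where "Pts = {(0::real, 2 / sqrt 6 * s), (1 / sqrt 2 * s, - 1 / sqrt 6 * s),
                        (- 1 / sqrt 2 * s, - 1 / sqrt 6 * s)}"
  have Pts_q: "Pts = {(0, q), (1 / sqrt 2 * s, - q/2), (- 1 / sqrt 2 * s, - q/2)}"
    unfolding Pts_def y6 y6' ..
  have sub1: "Pts \<subseteq> {p. f p = m}"
  proof -
    have "f (0, q) = m" by (rule hit) (simp_all add: power3_eq_cube power2_eq_square)
    moreover have "f (1 / sqrt 2 * s, - q/2) = m" by (rule side[OF sq2])
    moreover have "f (- 1 / sqrt 2 * s, - q/2) = m" by (rule side[OF sq2'])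
    ultimately show ?thesis unfolding Pts_q by auto
  qed
  have sub2: "{p. f p = m} \<subseteq> Pts"
  proof
    fix p assume "p \<in> {p. f p = m}"
    then have fp: "f p = m" by simp
    obtain x y where p: "p = (x,y)" by (cases p)
    define r where "r = sqrt (x^2+y^2)"
    define u where "u = y * (y^2-3 * x^2)"
    have r0: "r \<ge> 0" unfolding r_def by simp
    have T1: "(r - q)^2 * Q r \<ge> 0" using Qpos[OF r0] by (intro mult_nonneg_nonneg) auto
    have T2: "K * r^3 - K * u \<ge> 0"
      using cube_ineq(1)[OF r_def] Kpos unfolding u_def by (simp add: mult_left_mono)
    have sum0: "(r - q)^2 * Q r + (K * r^3 - K * u) = 0"
      using decomp[of x y] fp p unfolding r_def u_def by simp
    have "(r - q)^2 * Q r = 0" using T1 T2 sum0 by linarith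
    then have "(r - q)^2 = 0" using Qpos[OF r0] by simp
    then have rq: "r = q" by simp
    have "K * r^3 - K * u = 0" using T1 T2 sum0 by linarith
    then have "K * (r^3 - u) = 0" by (simp add: right_diff_distrib)
    then have uq: "u = q^3" using Kpos rq by simp
    have rho: "x^2 + y^2 = q^2" using cube_ineq(3)[OF r_def] rq by simp
    have "x^2 * (x^2 - 3 * y^2)^2 = (x^2+y^2)^3 - u^2" using cube_ineq(2)[of r x y] r_def u_def by simp
    also have "\<dots> = 0" unfolding rho uq by (simp add: power_mult[symmetric])
    finally have "x^2 * (x^2 - 3 * y^2)^2 = 0" .
    then have cases: "x = 0 \<or> x^2 = 3 * y^2" by simp
    have q3: "q^3 > 0" using qpos by simp
    show "p \<in> Pts"
    proof (cases "x = 0")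
      case True
      then have yq: "y^2 = q^2" using rho by simp
      have "y * y^2 = q^3" using uq True unfolding u_def by simp
      then have "y > 0" using q3 by (metis not_less mult_nonpos_nonneg zero_le_power2)
      then have "y = q" using yq qpos by (metis power2_eq_iff neg_0_less_iff_less not_less_iff_gr_or_eq)
      then show ?thesis unfolding Pts_q p using True by simp
    next
      case False
      then have x3: "x^2 = 3 * y^2" using cases by simp
      have "4 * y^2 = q^2" using rho x3 by simp
      then have "(-2 * y)^2 = q^2" by (simp add: power_mult_distrib)
      then have "-2 * y = q \<or> -2 * y = -q" using power2_eq_iff by blast
      moreover have "u = (-2 * y)^3" unfolding u_def x3 by (simp add: power3_eq_cube power2_eq_square algebra_simps)
      ultimately have "-2 * y = q" using uq q3 by (auto simp: power3_eq_cube)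
      then have yv: "y = - q/2" by simp
      have "x^2 = s^2/2" using x3 yv q2 by (simp add: power_divide field_simps)
      then have "x^2 = (1 / sqrt 2 * s)^2" using sq2 by simp
      then have "x = 1 / sqrt 2 * s \<or> x = - (1 / sqrt 2 * s)" using power2_eq_iff by blast
      then have "x = 1 / sqrt 2 * s \<or> x = - 1 / sqrt 2 * s" by auto
      then show ?thesis unfolding Pts_q p using yv by auto
    qed
  qed
  have seteq: "{p. f p = m} = Pts" using sub1 sub2 by blast
  have Kdef': "K = b^2/(3 * sqrt 6)" unfolding K_def t_def ..
  note H = hess[OF Kdef', of a c]
  have hp: "hessian_pos_def f p" if pP: "p \<in> Pts" for p
  proof -
    have c2q: "2 * c^2 * q - 3 * K > 0" using Bpos Kpos by linarith
    consider "p = (0, q)" | x where "p = (x, - q/2)" "x^2 = s^2/2"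
    proof -
      have "p = (0,q) \<or> p = (1 / sqrt 2 * s, - q/2) \<or> p = (- 1 / sqrt 2 * s, - q/2)"
        using pP unfolding Pts_q by blast
      then show ?thesis using that sq2 sq2' by blast
    qed
    then show ?thesis
    proof cases
      case 1
      show ?thesis unfolding f_def 1
      proof (rule hp_intro)
        show "hessian (fabc a b c) (0, q) 1 1 > 0" unfolding H Arel using Kpos qpos
          by (simp add: algebra_simps)
        have "hessian (fabc a b c) (0, q) 1 1 * hessian (fabc a b c) (0, q) 2 2
             - (hessian (fabc a b c) (0, q) 1 2)^2 = (9 * K * q) * (q * (2 * c^2 * q - 3 * K))"
          unfolding H Arel by (simp add: algebra_simps power2_eq_square)
        also have "\<dots> > 0" using Kpos qpos c2q by simp
        finally show "hessian (fabc a b c) (0, q) 1 1 * hessian (fabc a b c) (0, q) 2 2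
             - (hessian (fabc a b c) (0, q) 1 2)^2 > 0" .
        show "hessian (fabc a b c) (0, q) 2 1 = hessian (fabc a b c) (0, q) 1 2" unfolding H ..
      qed
    next
      case 2
      have x2: "x^2 = 3 * q^2 / 4" using 2(2) q2 by simp
      show ?thesis unfolding f_def 2(1)
      proof (rule hp_intro)
        have "hessian (fabc a b c) (x, - q/2) 1 1 = 3 * c^2 * q^2 / 2" unfolding H x2 Arel
          by (simp add: algebra_simps power2_eq_square)
        moreover have "3 * c^2 * q^2 / 2 > 0" using c2 qpos by simp
        ultimately show "hessian (fabc a b c) (x, - q/2) 1 1 > 0" by linarith
        have "hessian (fabc a b c) (x, - q/2) 1 1 * hessian (fabc a b c) (x, - q/2) 2 2
             - (hessian (fabc a b c) (x, - q/2) 1 2)^2 = 9 * K * q^2 * (2 * c^2 * q - 3 * K)"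
          unfolding H power_mult_distrib x2 Arel by (simp add: algebra_simps power2_eq_square)
        also have "\<dots> > 0" using Kpos qpos c2q by simp
        finally show "hessian (fabc a b c) (x, - q/2) 1 1 * hessian (fabc a b c) (x, - q/2) 2 2
             - (hessian (fabc a b c) (x, - q/2) 1 2)^2 > 0" .
        show "hessian (fabc a b c) (x, - q/2) 2 1 = hessian (fabc a b c) (x, - q/2) 1 2" unfolding H ..
      qed
    qed
  qed
  show ?thesis
  proof (intro conjI)
    show "\<forall>p. f p \<ge> m" using geq by auto
    show "{p. f p = m} = {(0, 2 / sqrt 6 * s), (1 / sqrt 2 * s, - 1 / sqrt 6 * s),
                        (- 1 / sqrt 2 * s, - 1 / sqrt 6 * s)}" using seteq unfolding Pts_def .
    show "\<forall>p\<in>{p. f p = m}. hessian_pos_def f p" using hp seteq by auto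
  qed
qed

end
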